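(* Let $a=t_0<t_1<\cdots<t_m=b$ be a partition of $[a,b]$ and let $x_0,x_1,\ldots,x_m\in\mathbb{R}^n$ be fixed. Let $A(t)$ and $B(t)$ be real $n\times n$ matrix functions on $[a,b]$ such that (H1) $B(t)$ has full rank (is nonsingular) for every $t$; (H2) the control system $\dot x(t)=A(t)x(t)+B(t)u(t)$ is completely state controllable; (H3) $t\mapsto A(t)$ and $t\mapsto B(t)$ are $C^1$-smooth. Consider the optimal control problem $(P)$: \[\min_{u(\cdot)}\ J[u(\cdot)]=\int_a^b\langle B(t)u(t),B(t)u(t)\rangle\,dt\] subject to $\dot x(t)=A(t)x(t)+B(t)u(t)$ and $x(t_i)=x_i$ for $i=0,1,\ldots,m$, where the control $u:[a,b]\to\mathbb{R}^n$ is unrestricted and the state $x:[a,b]\to\mathbb{R}^n$ is absolutely continuous. Then the optimal control $u$ is, in each interval $[t_i,t_{i+1}]$, $i=0,1,\ldots,m-1$, a solution of the matrix differential equation $L^*\big(B(t)u\big)=0$, where $L=D-A(t)$ (with $D=d/dt$) and $L^*=-D-A(t)'$ is its adjoint; that is, $\frac{d}{dt}\big(B(t)u(t)\big)+A(t)'B(t)u(t)=0$. The corresponding optimal state trajectory $x$ satisfies $L^*Lx=0$ in each interval $[t_i,t_{i+1}]$, i.e. \[\ddot x(t)+\big(A(t)'-A(t)\big)\dot x(t)-\big(A(t)'A(t)+\dot A(t)\big)x(t)=0 .\]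
   Context: $\langle\cdot,\cdot\rangle$ is the Euclidean inner product on $\mathbb{R}^n$ and a prime ${}'$ denotes the transpose of a vector or matrix. The adjoint $L^*$ of $L=D-A(t)$ is taken with respect to the scalar product $\langle x_1,x_2\rangle=\int_a^b x_1(t)'x_2(t)\,dt$ on vector functions. *)

theory Defs
  imports "HOL-Analysis.Analysis"
begin

text \<open>A pair (u, x) is an admissible control/state pair on [a,b] for the system
  x' = A x + B u: the control u is unrestricted except that the cost integrand
  <B u, B u> is integrable (finite cost) and the system right-hand side is integrable,
  and the state x is absolutely continuous and solves the system in the
  Caratheodory sense, i.e. x(t) = x(a) + int_a^t (A x + B u) for all t in [a,b]
  (equivalently: x absolutely continuous with x' = A x + B u almost everywhere).\<close>
definition admissible_pair ::
  "(real \<Rightarrow> real^'n^'n) \<Rightarrow> (real \<Rightarrow> real^'n^'n) \<Rightarrow> real \<Rightarrow> real \<Rightarrow>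
   (real \<Rightarrow> real^'n) \<Rightarrow> (real \<Rightarrow> real^'n) \<Rightarrow> bool" where
  "admissible_pair A B a b u x \<longleftrightarrow>
     (\<lambda>s. (B s *v u s) \<bullet> (B s *v u s)) integrable_on {a..b} \<and>
     (\<lambda>s. A s *v x s + B s *v u s) integrable_on {a..b} \<and>
     (\<forall>t\<in>{a..b}. x t = x a + integral {a..t} (\<lambda>s. A s *v x s + B s *v u s))"

definition cost :: "(real \<Rightarrow> real^'n^'n) \<Rightarrow> real \<Rightarrow> real \<Rightarrow> (real \<Rightarrow> real^'n) \<Rightarrow> real" where
  "cost B a b u = integral {a..b} (\<lambda>s. (B s *v u s) \<bullet> (B s *v u s))"

definition completely_controllable ::
  "(real \<Rightarrow> real^'n^'n) \<Rightarrow> (real \<Rightarrow> real^'n^'n) \<Rightarrow> real \<Rightarrow> real \<Rightarrow> bool" where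
  "completely_controllable A B a b \<longleftrightarrow>
     (\<forall>\<xi> \<eta>. \<exists>u x. admissible_pair A B a b u x \<and> x a = \<xi> \<and> x b = \<eta>)"

end

theory Submission
  imports Defs
begin

lemma sigma_finite_lebesgue: "sigma_finite_measure (lebesgue :: 'a::euclidean_space measure)"
proof
  obtain A :: "'a set set" where A: "countable A" "A \<subseteq> sets lborel" "\<Union>A = space lborel" "\<forall>a\<in>A. emeasure lborel a \<noteq> \<infinity>"
    using lborel.sigma_finite_countable by blast
  show "\<exists>A::'a set set. countable A \<and> A \<subseteq> sets lebesgue \<and> \<Union> A = space lebesgue \<and> (\<forall>a\<in>A. emeasure lebesgue a \<noteq> \<infinity>)"
    using A by (intro exI[of _ A]) (auto simp: subset_iff)
qed

interpretation leb: sigma_finite_measure "lebesgue :: real measure"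
  by (rule sigma_finite_lebesgue)

interpretation leb_pair: pair_sigma_finite "lebesgue :: real measure" "lebesgue :: real measure" ..

lemma id_borel_lebesgue[measurable]: "(\<lambda>x::real. x) \<in> borel_measurable lebesgue"
  by (rule measurable_completion) simp


lemma leb_to_HK:
  fixes g :: "real \<Rightarrow> 'a::euclidean_space"
  assumes "integrable lebesgue g"
  shows "(\<integral>x. g x \<partial>lebesgue) = integral UNIV g"
  using integral_lebesgue[OF assms] by simp

lemma ibp_fubini:
  fixes f k :: "real \<Rightarrow> 'a::euclidean_space"
  assumes f: "f absolutely_integrable_on {p..q}" and k: "k absolutely_integrable_on {p..q}"
  shows "integral {p..q} (\<lambda>t. integral {p..t} f \<bullet> k t) = integral {p..q} (\<lambda>s. f s \<bullet> integral {s..q} k)"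
proof -
  define f0 where "f0 x = indicator {p..q} x *\<^sub>R f x" for x
  define k0 where "k0 x = indicator {p..q} x *\<^sub>R k x" for x
  have f0: "integrable lebesgue f0" using f unfolding set_integrable_def f0_def by simp
  have k0: "integrable lebesgue k0" using k unfolding set_integrable_def k0_def by simp
  have f0m[measurable]: "f0 \<in> borel_measurable lebesgue" using f0 by auto
  have k0m[measurable]: "k0 \<in> borel_measurable lebesgue" using k0 by auto
  define H where "H = (\<lambda>(x::real,y::real). (f0 x \<bullet> k0 y) * of_bool (x \<le> y))"
  have Nint: "integrable (lebesgue \<Otimes>\<^sub>M lebesgue) (\<lambda>(x,y). norm (f0 x) * norm (k0 y))"
  proof (rule leb_pair.Fubini_integrable)
    show "(\<lambda>(x, y). norm (f0 x) * norm (k0 y)) \<in> borel_measurable (lebesgue \<Otimes>\<^sub>M lebesgue)"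
      by measurable
    have "integrable lebesgue (\<lambda>x. norm (f0 x) * (\<integral>y. norm (k0 y) \<partial>lebesgue))"
      using f0 by (intro integrable_mult_left) auto
    then show "integrable lebesgue (\<lambda>x. \<integral>y. norm (case (x, y) of (x, y) \<Rightarrow> norm (f0 x) * norm (k0 y)) \<partial>lebesgue)"
      by simp
    show "AE x in lebesgue. integrable lebesgue (\<lambda>y. case (x, y) of (x, y) \<Rightarrow> norm (f0 x) * norm (k0 y))"
      using k0 by (auto intro!: integrable_mult_right)
  qed
  have Hm[measurable]: "H \<in> borel_measurable (lebesgue \<Otimes>\<^sub>M lebesgue)"
    unfolding H_def by measurable
  have Hint: "integrable (lebesgue \<Otimes>\<^sub>M lebesgue) H"
  proof (rule Bochner_Integration.integrable_bound[OF Nint Hm])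
    show "AE x in lebesgue \<Otimes>\<^sub>M lebesgue. norm (H x) \<le> norm (case x of (x, y) \<Rightarrow> norm (f0 x) * norm (k0 y))"
      by (auto simp: H_def intro!: AE_I2 order_trans[OF _ Cauchy_Schwarz_ineq2])
  qed
  have Hint': "integrable (lebesgue \<Otimes>\<^sub>M lebesgue) (\<lambda>(x,y). H (x,y))" using Hint by simp
  have fub: "(\<integral>y. (\<integral>x. H (x,y) \<partial>lebesgue) \<partial>lebesgue) = (\<integral>x. (\<integral>y. H (x,y) \<partial>lebesgue) \<partial>lebesgue)"
    by (rule leb_pair.Fubini_integral[OF Hint'])
  have i1: "integrable lebesgue (\<lambda>y. \<integral>x. H (x,y) \<partial>lebesgue)"
    using leb_pair.integrable_snd[OF Hint'] .
  have i2: "integrable lebesgue (\<lambda>x. \<integral>y. H (x,y) \<partial>lebesgue)"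
    using leb_pair.integrable_fst[OF Hint'] .
  have inner1: "(\<integral>x. H (x,y) \<partial>lebesgue) = (if y \<in> {p..q} then integral {p..y} f \<bullet> k y else 0)" for y
  proof -
    have ig: "integrable lebesgue (\<lambda>x. of_bool (x \<le> y) *\<^sub>R f0 x)"
      by (rule Bochner_Integration.integrable_bound[OF f0]) (auto intro!: AE_I2)
    have "(\<integral>x. H (x,y) \<partial>lebesgue) = (\<integral>x. (of_bool (x \<le> y) *\<^sub>R f0 x) \<bullet> k0 y \<partial>lebesgue)"
      by (auto simp: H_def intro!: Bochner_Integration.integral_cong)
    also have "\<dots> = (\<integral>x. of_bool (x \<le> y) *\<^sub>R f0 x \<partial>lebesgue) \<bullet> k0 y"
      by (rule integral_inner_left) (use ig in simp)
    also have "\<dots> = integral UNIV (\<lambda>x. of_bool (x \<le> y) *\<^sub>R f0 x) \<bullet> k0 y"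
      using leb_to_HK[OF ig] by simp
    also have "\<dots> = (if y \<in> {p..q} then integral {p..y} f \<bullet> k y else 0)"
    proof (cases "y \<in> {p..q}")
      case True
      have "(\<lambda>x. of_bool (x \<le> y) *\<^sub>R f0 x) = (\<lambda>x. if x \<in> {p..y} then f x else 0)"
        using True by (auto simp: f0_def indicator_def fun_eq_iff)
      then show ?thesis using True integral_restrict_UNIV[of "{p..y}" f] by (simp add: k0_def)
    qed (auto simp add: k0_def)
    finally show ?thesis .
  qed
  have inner2: "(\<integral>y. H (x,y) \<partial>lebesgue) = (if x \<in> {p..q} then f x \<bullet> integral {x..q} k else 0)" for x
  proof -
    have ig: "integrable lebesgue (\<lambda>y. of_bool (x \<le> y) *\<^sub>R k0 y)"
      by (rule Bochner_Integration.integrable_bound[OF k0]) (auto intro!: AE_I2)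
    have "(\<integral>y. H (x,y) \<partial>lebesgue) = (\<integral>y. f0 x \<bullet> (of_bool (x \<le> y) *\<^sub>R k0 y) \<partial>lebesgue)"
      by (auto simp: H_def intro!: Bochner_Integration.integral_cong)
    also have "\<dots> = f0 x \<bullet> (\<integral>y. of_bool (x \<le> y) *\<^sub>R k0 y \<partial>lebesgue)"
      by (rule integral_inner_right) (use ig in simp)
    also have "\<dots> = f0 x \<bullet> integral UNIV (\<lambda>y. of_bool (x \<le> y) *\<^sub>R k0 y)"
      using leb_to_HK[OF ig] by simp
    also have "\<dots> = (if x \<in> {p..q} then f x \<bullet> integral {x..q} k else 0)"
    proof (cases "x \<in> {p..q}")
      case True
      have "(\<lambda>y. of_bool (x \<le> y) *\<^sub>R k0 y) = (\<lambda>y. if y \<in> {x..q} then k y else 0)"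
        using True by (auto simp: k0_def indicator_def fun_eq_iff)
      then show ?thesis using True integral_restrict_UNIV[of "{x..q}" k] by (simp add: f0_def)
    qed (auto simp add: f0_def)
    finally show ?thesis .
  qed
  have "integral {p..q} (\<lambda>t. integral {p..t} f \<bullet> k t) = integral UNIV (\<lambda>y. \<integral>x. H (x,y) \<partial>lebesgue)"
    using integral_restrict_UNIV[of "{p..q}" "\<lambda>t. integral {p..t} f \<bullet> k t"] by (simp add: inner1)
  also have "\<dots> = (\<integral>y. (\<integral>x. H (x,y) \<partial>lebesgue) \<partial>lebesgue)"
    using leb_to_HK[OF i1] by simp
  also have "\<dots> = (\<integral>x. (\<integral>y. H (x,y) \<partial>lebesgue) \<partial>lebesgue)" by (rule fub)
  also have "\<dots> = integral UNIV (\<lambda>x. \<integral>y. H (x,y) \<partial>lebesgue)"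
    using leb_to_HK[OF i2] by simp
  also have "\<dots> = integral {p..q} (\<lambda>s. f s \<bullet> integral {s..q} k)"
    using integral_restrict_UNIV[of "{p..q}" "\<lambda>s. f s \<bullet> integral {s..q} k"] by (simp add: inner2)
  finally show ?thesis .
qed


lemma mv_bounded_bilinear: "bounded_bilinear (\<lambda>(M::real^'n^'m) (v::real^'n). M *v v)"
  unfolding bilinear_conv_bounded_bilinear[symmetric] bilinear_def
proof safe
  fix M :: "real^'n^'m" show "linear ((*v) M)" by (rule matrix_vector_mul_linear)
next
  fix v :: "real^'n" show "linear (\<lambda>M::real^'n^'m. M *v v)"
    by (rule linearI) (simp_all add: matrix_vector_mult_add_rdistrib scaleR_matrix_vector_assoc)
qed

lemma dot_transpose: "((M::real^'n^'m) *v x) \<bullet> y = x \<bullet> (transpose M *v y)"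
  using adjoint_works[OF matrix_vector_mul_linear[of M], of x y] adjoint_matrix[of M]
  by (metis inner_commute)

definition sqi :: "real set \<Rightarrow> (real \<Rightarrow> 'b::euclidean_space) \<Rightarrow> bool" where
  "sqi S f \<longleftrightarrow> f \<in> borel_measurable (lebesgue_on S) \<and> (\<lambda>s. f s \<bullet> f s) integrable_on S"

lemma sqi_inner:
  assumes S: "S \<in> sets lebesgue" and f: "sqi S f" and g: "sqi S g"
  shows "(\<lambda>s. f s \<bullet> g s) integrable_on S"
proof (rule measurable_bounded_by_integrable_imp_integrable_real[OF _ _ _ S])
  show "(\<lambda>s. f s \<bullet> g s) \<in> borel_measurable (lebesgue_on S)"
    using f g unfolding sqi_def by (intro borel_measurable_inner) auto
  show "(\<lambda>s. f s \<bullet> f s + g s \<bullet> g s) integrable_on S"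
    using f g unfolding sqi_def by (auto intro!: integrable_add)
  show "\<bar>f x \<bullet> g x\<bar> \<le> f x \<bullet> f x + g x \<bullet> g x" for x
  proof -
    have "\<bar>f x \<bullet> g x\<bar> \<le> norm (f x) * norm (g x)" by (rule Cauchy_Schwarz_ineq2)
    also have "\<dots> \<le> (norm (f x))\<^sup>2 + (norm (g x))\<^sup>2"
      using sum_squares_bound[of "norm (f x)" "norm (g x)"]
        mult_nonneg_nonneg[OF norm_ge_zero norm_ge_zero, of "f x" "g x"] by linarith
    finally show ?thesis by (simp add: power2_norm_eq_inner)
  qed
qed

lemma sqi_add: "S \<in> sets lebesgue \<Longrightarrow> sqi S f \<Longrightarrow> sqi S g \<Longrightarrow> sqi S (\<lambda>s. f s + g s)"
  using sqi_inner[of S f g] sqi_inner[of S g f] sqi_inner[of S f f] sqi_inner[of S g g]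
  unfolding sqi_def
  by (auto simp: inner_add_left inner_add_right intro!: integrable_add)

lemma sqi_scale: "sqi S f \<Longrightarrow> sqi S (\<lambda>s. c *\<^sub>R f s)"
  using integrable_on_cmult_left[of "\<lambda>s. f s \<bullet> f s" S "c*c"] unfolding sqi_def by (auto simp: mult.assoc)

lemma sqi_neg: "sqi S f \<Longrightarrow> sqi S (\<lambda>s. - f s)"
  using sqi_scale[of S f "-1"] by simp

lemma sqi_diff: "S \<in> sets lebesgue \<Longrightarrow> sqi S f \<Longrightarrow> sqi S g \<Longrightarrow> sqi S (\<lambda>s. f s - g s)"
  using sqi_add[of S f "\<lambda>s. - g s"] sqi_neg[of S g] by simp

lemma sqi_cont: "continuous_on {p..q} f \<Longrightarrow> sqi {p..q} f"
  unfolding sqi_def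
  by (auto intro!: continuous_imp_measurable_on_sets_lebesgue integrable_continuous_interval continuous_intros)

lemma sqi_abs:
  assumes "sqi {p..q} f" shows "f absolutely_integrable_on {p..q}"
proof (rule measurable_bounded_by_integrable_imp_absolutely_integrable)
  show "f \<in> borel_measurable (lebesgue_on {p..q})" using assms by (simp add: sqi_def)
  show "(\<lambda>s. 1 + f s \<bullet> f s) integrable_on {p..q}" using assms
    by (auto simp: sqi_def intro!: integrable_add)
  show "norm (f x) \<le> 1 + f x \<bullet> f x" for x
  proof -
    have "norm (f x) \<le> 1 + (norm (f x))\<^sup>2"
    proof (cases "norm (f x) \<le> 1")
      case True then show ?thesis using zero_le_power2[of "norm (f x)"] by linarith
    next
      case False
      then have "norm (f x) * 1 \<le> norm (f x) * norm (f x)" by (intro mult_left_mono) auto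
      then show ?thesis by (simp add: power2_eq_square)
    qed
    then show ?thesis by (simp add: power2_norm_eq_inner)
  qed
qed auto

lemma sqi_mono: "sqi {a..b} f \<Longrightarrow> {p..q} \<subseteq> {a..b} \<Longrightarrow> sqi {p..q} f"
  unfolding sqi_def
  by (metis integrable_on_subinterval measurable_restrict_mono box_real(2))


lemma cont_mv: "continuous_on S A \<Longrightarrow> continuous_on S x \<Longrightarrow> continuous_on S (\<lambda>s. (A s :: real^'n^'m) *v x s)"
  using bounded_bilinear.continuous_on[OF mv_bounded_bilinear, of S A x] by simp

lemma deriv_mv:
  "(A has_vector_derivative A') (at s within S) \<Longrightarrow> (x has_vector_derivative x') (at s within S) \<Longrightarrow>
   ((\<lambda>s. (A s :: real^'n^'m) *v x s) has_vector_derivative (A s *v x' + A' *v x s)) (at s within S)"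
  using bounded_bilinear.has_vector_derivative[OF mv_bounded_bilinear, of A A' s S x x'] by simp

lemma cont_transpose: "continuous_on S A \<Longrightarrow> continuous_on S (\<lambda>s. transpose (A s :: real^'n^'m))"
  unfolding transpose_def by (intro continuous_on_vec_lambda continuous_on_component)

lemma mv_cont_abs:
  fixes M :: "real \<Rightarrow> real^'n^'m" and g :: "real \<Rightarrow> real^'n"
  assumes M: "continuous_on {p..q} M" and g: "g absolutely_integrable_on {p..q}"
  shows "(\<lambda>s. M s *v g s) absolutely_integrable_on {p..q}"
proof -
  obtain B where B: "\<And>s. s \<in> {p..q} \<Longrightarrow> norm (M s) \<le> B"
    using compact_imp_bounded[OF compact_continuous_image[OF M compact_Icc]]
    unfolding bounded_iff by (auto simp: atLeastAtMost_iff[symmetric] simp del: atLeastAtMost_iff)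
  obtain K where K: "\<And>a b. norm ((a::real^'n^'m) *v b) \<le> norm a * norm b * K" "K > 0"
    using bounded_bilinear.pos_bounded[OF mv_bounded_bilinear] by auto
  show ?thesis
  proof (rule measurable_bounded_by_integrable_imp_absolutely_integrable)
    have Mm: "M \<in> borel_measurable (lebesgue_on {p..q})"
      by (rule continuous_imp_measurable_on_sets_lebesgue[OF M]) auto
    have gm: "g \<in> borel_measurable (lebesgue_on {p..q})"
      by (rule absolutely_integrable_imp_borel_measurable[OF g]) auto
    show "(\<lambda>s. M s *v g s) \<in> borel_measurable (lebesgue_on {p..q})"
      by (rule borel_measurable_continuous_Pair[OF Mm gm])
         (intro bounded_bilinear.continuous_on[OF mv_bounded_bilinear, simplified] continuous_intros)
    show "(\<lambda>s. (B * K) * norm (g s)) integrable_on {p..q}"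
      using integrable_on_cmult_left[of "\<lambda>s. norm (g s)" "{p..q}" "B*K"] g
      by (simp add: absolutely_integrable_on_def)
    show "norm (M s *v g s) \<le> (B * K) * norm (g s)" if "s \<in> {p..q}" for s
    proof -
      have "norm (M s *v g s) \<le> norm (M s) * norm (g s) * K" by (rule K)
      also have "\<dots> \<le> B * norm (g s) * K"
        using B[OF that] K(2) by (intro mult_right_mono) (auto intro: mult_right_mono)
      finally show ?thesis by (simp add: mult_ac)
    qed
  qed auto
qed

lemma nonneg_int0_AE:
  fixes f :: "real \<Rightarrow> real"
  assumes f: "f integrable_on S" and nn: "\<And>x. x \<in> S \<Longrightarrow> 0 \<le> f x" and z: "integral S f = 0"
  shows "AE x in lebesgue. x \<in> S \<longrightarrow> f x = 0"
proof -
  have ai: "f absolutely_integrable_on S" by (rule nonnegative_absolutely_integrable_1[OF f nn])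
  then have int: "integrable lebesgue (\<lambda>x. indicator S x *\<^sub>R f x)" by (simp add: set_integrable_def)
  have "(\<integral>x. indicator S x *\<^sub>R f x \<partial>lebesgue) = 0"
    using set_lebesgue_integral_eq_integral(2)[OF ai] z by (simp add: set_lebesgue_integral_def)
  then have "AE x in lebesgue. indicator S x *\<^sub>R f x = 0"
    using integral_nonneg_eq_0_iff_AE[OF int] nn by (auto simp: indicator_def)
  then show ?thesis by eventually_elim (auto simp: indicator_def split: if_splits)
qed


lemma conclude:
  fixes A dA :: "real \<Rightarrow> real^'n^'n" and w x :: "real \<Rightarrow> real^'n" and p q :: real
  assumes pq: "p < q"
    and Acont: "continuous_on {p..q} A"
    and dA: "\<And>s. s\<in>{p..q} \<Longrightarrow> (A has_vector_derivative dA s) (at s within {p..q})"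
    and w: "sqi {p..q} w"
    and xeq: "\<And>t. t\<in>{p..q} \<Longrightarrow> x t = x p + integral {p..t} (\<lambda>s. A s *v x s + w s)"
    and xint: "(\<lambda>s. A s *v x s + w s) integrable_on {p..q}"
    and orth: "\<And>k. sqi {p..q} k \<Longrightarrow> integral {p..q} k = 0 \<Longrightarrow>
                 integral {p..q} (\<lambda>s. w s \<bullet> (k s - A s *v integral {p..s} k)) = 0"
  shows "(\<exists>wh. (\<forall>s\<in>{p..q}. (wh has_vector_derivative (- (transpose (A s) *v wh s))) (at s within {p..q})) \<and>
              (AE s in lebesgue. s \<in> {p..q} \<longrightarrow> w s = wh s)) \<and>
         (\<exists>x1 x2. \<forall>s\<in>{p..q}.
            (x has_vector_derivative x1 s) (at s within {p..q}) \<and>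
            (x1 has_vector_derivative x2 s) (at s within {p..q}) \<and>
            x2 s + (transpose (A s) - A s) *v x1 s - (transpose (A s) ** A s + dA s) *v x s = 0)"
proof -
  have S: "{p..q} \<in> sets lebesgue" by simp
  define f where "f s = transpose (A s) *v w s" for s
  define F where "F t = integral {p..t} f" for t
  have wabs: "w absolutely_integrable_on {p..q}" by (rule sqi_abs[OF w])
  have At: "continuous_on {p..q} (\<lambda>s. transpose (A s))" by (rule cont_transpose[OF Acont])
  have fabs: "f absolutely_integrable_on {p..q}"
    unfolding f_def by (rule mv_cont_abs[OF At wabs])
  have fint: "f integrable_on {p..q}" using fabs by (simp add: absolutely_integrable_on_def)
  have Fc: "continuous_on {p..q} F" unfolding F_def by (rule indefinite_integral_continuous_1[OF fint])
  have D: "integral {p..q} (\<lambda>s. (w s + F s) \<bullet> k s) = 0"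
    if k: "sqi {p..q} k" and k0: "integral {p..q} k = 0" for k
  proof -
    define z where "z s = integral {p..s} k" for s
    have kabs: "k absolutely_integrable_on {p..q}" by (rule sqi_abs[OF k])
    have kint: "k integrable_on {p..q}" using kabs by (simp add: absolutely_integrable_on_def)
    have zc: "continuous_on {p..q} z" unfolding z_def by (rule indefinite_integral_continuous_1[OF kint])
    have Azc: "continuous_on {p..q} (\<lambda>s. A s *v z s)" by (rule cont_mv[OF Acont zc])
    have i1: "(\<lambda>s. w s \<bullet> k s) integrable_on {p..q}" by (rule sqi_inner[OF S w k])
    have i2: "(\<lambda>s. w s \<bullet> (A s *v z s)) integrable_on {p..q}" by (rule sqi_inner[OF S w sqi_cont[OF Azc]])
    have i3: "(\<lambda>s. F s \<bullet> k s) integrable_on {p..q}" by (rule sqi_inner[OF S sqi_cont[OF Fc] k])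
    have o: "integral {p..q} (\<lambda>s. w s \<bullet> (k s - A s *v z s)) = 0"
      using orth[OF k k0] by (simp add: z_def)
    then have o2: "integral {p..q} (\<lambda>s. w s \<bullet> k s) - integral {p..q} (\<lambda>s. w s \<bullet> (A s *v z s)) = 0"
      using integral_diff[OF i1 i2] by (simp add: inner_diff_right)
    have zq: "z s = - integral {s..q} k" if "s \<in> {p..q}" for s
      using Henstock_Kurzweil_Integration.integral_combine[of p s q k] that kint k0 by (auto simp: z_def eq_neg_iff_add_eq_0)
    have "integral {p..q} (\<lambda>t. F t \<bullet> k t) = integral {p..q} (\<lambda>s. f s \<bullet> integral {s..q} k)"
      unfolding F_def by (rule ibp_fubini[OF fabs kabs])
    also have "\<dots> = integral {p..q} (\<lambda>s. - (w s \<bullet> (A s *v z s)))"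
    proof (rule integral_cong)
      fix s assume s: "s \<in> {p..q}"
      have "w s \<bullet> (A s *v z s) = (A s *v z s) \<bullet> w s" by (rule inner_commute)
      also have "\<dots> = z s \<bullet> f s" unfolding f_def by (rule dot_transpose)
      finally show "f s \<bullet> integral {s..q} k = - (w s \<bullet> (A s *v z s))"
        using zq[OF s] by (simp add: inner_commute)
    qed
    also have "\<dots> = - integral {p..q} (\<lambda>s. w s \<bullet> (A s *v z s))" by (rule integral_neg)
    finally have "integral {p..q} (\<lambda>t. F t \<bullet> k t) = - integral {p..q} (\<lambda>s. w s \<bullet> k s)"
      using o2 by simp
    then show ?thesis
      using integral_add[OF i1 i3] by (simp add: inner_add_left)
  qed
  define g where "g s = w s + F s" for s
  have gs: "sqi {p..q} g" unfolding g_def by (rule sqi_add[OF S w sqi_cont[OF Fc]])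
  have gint: "g integrable_on {p..q}" using sqi_abs[OF gs] by (simp add: absolutely_integrable_on_def)
  define c where "c = (1/(q-p)) *\<^sub>R integral {p..q} g"
  define k where "k s = g s - c" for s
  have ks: "sqi {p..q} k" unfolding k_def by (rule sqi_diff[OF S gs sqi_cont]) simp
  have kint: "k integrable_on {p..q}" using sqi_abs[OF ks] by (simp add: absolutely_integrable_on_def)
  have k0: "integral {p..q} k = 0"
    unfolding k_def using integral_diff[OF gint integrable_const_ivl[of c p q]] pq
    by (simp add: c_def)
  have gk: "integral {p..q} (\<lambda>s. g s \<bullet> k s) = 0" using D[OF ks k0] by (simp add: g_def)
  have ck: "((\<lambda>s. c \<bullet> k s) has_integral c \<bullet> integral {p..q} k) {p..q}"
    using has_integral_linear[OF integrable_integral[OF kint] bounded_linear_inner_right[of c]]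
    by (simp add: o_def)
  have i_gk: "(\<lambda>s. g s \<bullet> k s) integrable_on {p..q}" by (rule sqi_inner[OF S gs ks])
  have kk: "integral {p..q} (\<lambda>s. k s \<bullet> k s) = 0"
  proof -
    have "integral {p..q} (\<lambda>s. k s \<bullet> k s) = integral {p..q} (\<lambda>s. g s \<bullet> k s - c \<bullet> k s)"
      by (simp add: k_def inner_diff_left)
    also have "\<dots> = 0"
      using integral_diff[OF i_gk has_integral_integrable[OF ck]] gk integral_unique[OF ck] k0 by simp
    finally show ?thesis .
  qed
  have "AE s in lebesgue. s \<in> {p..q} \<longrightarrow> k s \<bullet> k s = 0"
    by (rule nonneg_int0_AE[OF _ _ kk]) (use ks in \<open>auto simp: sqi_def\<close>)
  then have AEw: "AE s in lebesgue. s \<in> {p..q} \<longrightarrow> w s = c - F s"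
  proof eventually_elim
    case (elim s)
    then show ?case unfolding inner_eq_zero_iff k_def g_def by (auto simp: algebra_simps)
  qed
  then obtain N where N: "negligible N" "{s. \<not> (s \<in> {p..q} \<longrightarrow> w s = c - F s)} \<subseteq> N"
    unfolding eventually_ae_filter_negligible by blast
  define wh where "wh s = c - F s" for s
  have whc: "continuous_on {p..q} wh" unfolding wh_def by (intro continuous_intros Fc)
  have hc: "continuous_on {p..q} (\<lambda>s. transpose (A s) *v wh s)" by (rule cont_mv[OF At whc])
  have Feq: "F t = integral {p..t} (\<lambda>s. transpose (A s) *v wh s)" if t: "t \<in> {p..q}" for t
    unfolding F_def
  proof (rule integral_spike[OF N(1)])
    fix s assume "s \<in> {p..t} - N"
    then show "transpose (A s) *v wh s = f s" using N(2) t by (auto simp: f_def wh_def)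
  qed
  have Fd: "(F has_vector_derivative (transpose (A s) *v wh s)) (at s within {p..q})" if s: "s \<in> {p..q}" for s
  proof -
    have "((\<lambda>u. integral {p..u} (\<lambda>s. transpose (A s) *v wh s)) has_vector_derivative (transpose (A s) *v wh s)) (at s within {p..q})"
      by (rule integral_has_vector_derivative[OF hc s])
    then show ?thesis
      by (rule has_vector_derivative_transform[OF s, rotated]) (rule Feq)
  qed
  have whd: "(wh has_vector_derivative - (transpose (A s) *v wh s)) (at s within {p..q})" if s: "s \<in> {p..q}" for s
  proof -
    have "((\<lambda>s. c - F s) has_vector_derivative (0 - transpose (A s) *v wh s)) (at s within {p..q})"
      by (rule has_vector_derivative_diff[OF has_vector_derivative_const Fd[OF s]])
    then show ?thesis unfolding wh_def[abs_def] by simp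
  qed
  have part1: "\<exists>wh. (\<forall>s\<in>{p..q}. (wh has_vector_derivative (- (transpose (A s) *v wh s))) (at s within {p..q})) \<and>
              (AE s in lebesgue. s \<in> {p..q} \<longrightarrow> w s = wh s)"
  proof (intro exI[of _ wh] conjI ballI)
    show "AE s in lebesgue. s \<in> {p..q} \<longrightarrow> w s = wh s" using AEw unfolding wh_def .
  qed (rule whd)
  have xc: "continuous_on {p..q} x"
  proof (rule continuous_on_eq[of _ "\<lambda>t. x p + integral {p..t} (\<lambda>s. A s *v x s + w s)"])
    show "continuous_on {p..q} (\<lambda>t. x p + integral {p..t} (\<lambda>s. A s *v x s + w s))"
      by (intro continuous_intros indefinite_integral_continuous_1[OF xint])
  qed (metis xeq)
  define x1 where "x1 s = A s *v x s + wh s" for s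
  have x1c: "continuous_on {p..q} x1" unfolding x1_def by (intro continuous_intros cont_mv[OF Acont xc] whc)
  have xeq': "x t = x p + integral {p..t} x1" if t: "t \<in> {p..q}" for t
  proof -
    have "integral {p..t} (\<lambda>s. A s *v x s + w s) = integral {p..t} x1"
    proof (rule integral_spike[OF N(1)])
      fix s assume "s \<in> {p..t} - N"
      then show "x1 s = A s *v x s + w s" using N(2) t by (auto simp: x1_def wh_def)
    qed
    then show ?thesis using xeq[OF t] by simp
  qed
  have xd: "(x has_vector_derivative x1 s) (at s within {p..q})" if s: "s \<in> {p..q}" for s
  proof -
    have "((\<lambda>t. x p + integral {p..t} x1) has_vector_derivative (0 + x1 s)) (at s within {p..q})"
      by (rule has_vector_derivative_add[OF has_vector_derivative_const integral_has_vector_derivative[OF x1c s]])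
    then have "((\<lambda>t. x p + integral {p..t} x1) has_vector_derivative x1 s) (at s within {p..q})"
      by simp
    then show ?thesis by (rule has_vector_derivative_transform[OF s, rotated]) (rule xeq')
  qed
  define x2 where "x2 s = (A s *v x1 s + dA s *v x s) + - (transpose (A s) *v wh s)" for s
  have x1d: "(x1 has_vector_derivative x2 s) (at s within {p..q})" if s: "s \<in> {p..q}" for s
  proof -
    have "((\<lambda>s. A s *v x s + wh s) has_vector_derivative x2 s) (at s within {p..q})"
      unfolding x2_def by (rule has_vector_derivative_add[OF deriv_mv[OF dA[OF s] xd[OF s]] whd[OF s]])
    then show ?thesis by (rule has_vector_derivative_transform[OF s, rotated]) (simp add: x1_def)
  qed
  have alg: "x2 s + (transpose (A s) - A s) *v x1 s - (transpose (A s) ** A s + dA s) *v x s = 0" for s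
  proof -
    have whe: "wh s = x1 s - A s *v x s" by (simp add: x1_def)
    show ?thesis
      unfolding x2_def whe
      by (simp only: matrix_vector_mult_diff_rdistrib matrix_vector_mult_add_rdistrib
          matrix_vector_mult_diff_distrib matrix_vector_mul_assoc[symmetric]) (simp add: algebra_simps)
  qed
  show ?thesis using part1 xd x1d alg by blast
qed


lemma inv_right: "invertible (M::real^'n^'n) \<Longrightarrow> M *v (matrix_inv M *v y) = y"
proof -
  assume "invertible M"
  then have "M ** matrix_inv M = mat 1"
    unfolding invertible_def matrix_inv_def by (rule someI2_ex) auto
  then show ?thesis by (simp add: matrix_vector_mul_assoc)
qed

lemma variation:
  fixes A B :: "real \<Rightarrow> real^'n^'n" and u x k :: "real \<Rightarrow> real^'n"
  assumes ab: "a \<le> p" "p < q" "q \<le> b"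
    and H1: "\<And>s. s \<in> {a..b} \<Longrightarrow> invertible (B s)"
    and Acont: "continuous_on {a..b} A"
    and adm: "admissible_pair A B a b u x"
    and wsq: "sqi {a..b} (\<lambda>s. B s *v u s)"
    and k: "sqi {p..q} k" and k0: "integral {p..q} k = 0"
  defines "z \<equiv> \<lambda>s. if s \<in> {p..q} then integral {p..s} k else 0"
    and "h \<equiv> \<lambda>s. if s \<in> {p..q} then k s - A s *v integral {p..s} k else 0"
  shows "admissible_pair A B a b (\<lambda>s. u s + matrix_inv (B s) *v h s) (\<lambda>s. x s + z s)"
    and "\<And>t. t \<notin> {p<..<q} \<Longrightarrow> z t = 0"
    and "cost B a b (\<lambda>s. u s + matrix_inv (B s) *v h s) = cost B a b u
           + 2 * integral {p..q} (\<lambda>s. (B s *v u s) \<bullet> (k s - A s *v integral {p..s} k))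
           + integral {p..q} (\<lambda>s. (k s - A s *v integral {p..s} k) \<bullet> (k s - A s *v integral {p..s} k))"
proof -
  define w where "w s = B s *v u s" for s
  define d where "d s = k s - A s *v integral {p..s} k" for s
  define v where "v s = u s + matrix_inv (B s) *v h s" for s
  have S: "{p..q} \<in> sets lebesgue" by simp
  have sub: "{p..q} \<subseteq> {a..b}" using ab by auto
  have kabs: "k absolutely_integrable_on {p..q}" by (rule sqi_abs[OF k])
  have kint: "k integrable_on {p..q}" using kabs by (simp add: absolutely_integrable_on_def)
  have Ic: "continuous_on {p..q} (\<lambda>s. integral {p..s} k)" by (rule indefinite_integral_continuous_1[OF kint])
  have Apq: "continuous_on {p..q} A" using Acont sub by (rule continuous_on_subset)
  have ds: "sqi {p..q} d" unfolding d_def by (rule sqi_diff[OF S k sqi_cont[OF cont_mv[OF Apq Ic]]])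
  have wpq: "sqi {p..q} w" unfolding w_def[abs_def] by (rule sqi_mono[OF wsq sub])
  have Bv: "B s *v v s = w s + h s" if "s \<in> {a..b}" for s
    using inv_right[OF H1[OF that]] by (simp add: v_def w_def matrix_vector_right_distrib)
  have hd: "h s = (if s \<in> {p..q} then d s else 0)" for s by (simp add: h_def d_def)
  have adm1: "(\<lambda>s. w s \<bullet> w s) integrable_on {a..b}"
    and adm2: "(\<lambda>s. A s *v x s + w s) integrable_on {a..b}"
    and adm3: "\<And>t. t \<in> {a..b} \<Longrightarrow> x t = x a + integral {a..t} (\<lambda>s. A s *v x s + w s)"
    using adm unfolding admissible_pair_def w_def[abs_def] by blast+
  have wd_int: "(\<lambda>s. w s \<bullet> d s) integrable_on {p..q}" by (rule sqi_inner[OF S wpq ds])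
  have dd_int: "(\<lambda>s. d s \<bullet> d s) integrable_on {p..q}" using ds by (simp add: sqi_def)
  have wh_eq: "w s \<bullet> h s = (if s \<in> {p..q} then w s \<bullet> d s else 0)" for s by (simp add: hd)
  have hh_eq: "h s \<bullet> h s = (if s \<in> {p..q} then d s \<bullet> d s else 0)" for s by (simp add: hd)
  have wh_int: "(\<lambda>s. w s \<bullet> h s) integrable_on {a..b}"
    unfolding wh_eq by (rule integrable_on_superset[OF _ _ sub]) (auto intro: integrable_eq[OF wd_int])
  have hh_int: "(\<lambda>s. h s \<bullet> h s) integrable_on {a..b}"
    unfolding hh_eq by (rule integrable_on_superset[OF _ _ sub]) (auto intro: integrable_eq[OF dd_int])
  have wh_val: "integral {a..b} (\<lambda>s. w s \<bullet> h s) = integral {p..q} (\<lambda>s. w s \<bullet> d s)"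
    unfolding wh_eq integral_restrict_Int using ab by (simp add: max_absorb1 min_absorb1)
  have hh_val: "integral {a..b} (\<lambda>s. h s \<bullet> h s) = integral {p..q} (\<lambda>s. d s \<bullet> d s)"
    unfolding hh_eq integral_restrict_Int using ab by (simp add: max_absorb1 min_absorb1)
  have exp: "(B s *v v s) \<bullet> (B s *v v s) = w s \<bullet> w s + 2 * (w s \<bullet> h s) + h s \<bullet> h s" if "s \<in> {a..b}" for s
    using Bv[OF that] by (simp add: inner_add_left inner_add_right inner_commute)
  have int2: "(\<lambda>s. w s \<bullet> w s + 2 * (w s \<bullet> h s) + h s \<bullet> h s) integrable_on {a..b}"
    by (intro integrable_add adm1 hh_int integrable_on_cmult_left[of _ _ 2, simplified] wh_int)
  have costv: "cost B a b v = cost B a b u + 2 * integral {p..q} (\<lambda>s. w s \<bullet> d s) + integral {p..q} (\<lambda>s. d s \<bullet> d s)"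
  proof -
    have "cost B a b v = integral {a..b} (\<lambda>s. w s \<bullet> w s + 2 * (w s \<bullet> h s) + h s \<bullet> h s)"
      unfolding cost_def by (rule integral_cong) (rule exp)
    also have "\<dots> = integral {a..b} (\<lambda>s. w s \<bullet> w s) + 2 * integral {a..b} (\<lambda>s. w s \<bullet> h s) + integral {a..b} (\<lambda>s. h s \<bullet> h s)"
      using adm1 wh_int hh_int by (simp add: integral_add integrable_add integrable_on_cmult_left[of _ _ 2, simplified])
    finally show ?thesis unfolding wh_val hh_val by (simp add: cost_def w_def)
  qed
  then show "cost B a b (\<lambda>s. u s + matrix_inv (B s) *v h s) = cost B a b u
           + 2 * integral {p..q} (\<lambda>s. (B s *v u s) \<bullet> (k s - A s *v integral {p..s} k))
           + integral {p..q} (\<lambda>s. (k s - A s *v integral {p..s} k) \<bullet> (k s - A s *v integral {p..s} k))"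
    by (simp add: v_def[abs_def] w_def d_def)
  show z0: "z t = 0" if "t \<notin> {p<..<q}" for t
  proof -
    have "t < p \<or> t = p \<or> t = q \<or> t > q" using that by auto
    then show ?thesis using k0 by (auto simp: z_def)
  qed
  define kr where "kr s = (if s \<in> {p..q} then k s else 0)" for s
  have kr_int: "kr integrable_on {a..b}"
    unfolding kr_def by (rule integrable_on_superset[OF _ _ sub]) (auto intro: integrable_eq[OF kint])
  have Azh: "A s *v z s + h s = kr s" for s
    by (simp add: z_def h_def kr_def)
  have zt: "z t = integral {a..t} kr" if t: "t \<in> {a..b}" for t
  proof -
    have "integral {a..t} kr = integral ({p..q} \<inter> {a..t}) k"
      unfolding kr_def by (rule integral_restrict_Int)
    also have "\<dots> = z t"
    proof (cases "t < p")
      case True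
      then have e: "{p..q} \<inter> {a..t} = {}" by auto
      show ?thesis unfolding e using True by (simp add: z_def)
    next
      case False
      show ?thesis
      proof (cases "t \<le> q")
        case True
        then have e: "{p..q} \<inter> {a..t} = {p..t}" using False ab by auto
        show ?thesis unfolding e using True False by (simp add: z_def)
      next
        case False2: False
        then have e: "{p..q} \<inter> {a..t} = {p..q}" using ab by auto
        show ?thesis unfolding e using False2 k0 by (simp add: z_def)
      qed
    qed
    finally show ?thesis by simp
  qed
  have za: "z a = 0" using zt[of a] ab by simp
  show "admissible_pair A B a b (\<lambda>s. u s + matrix_inv (B s) *v h s) (\<lambda>s. x s + z s)"
    unfolding admissible_pair_def
  proof (intro conjI ballI)
    show "(\<lambda>s. (B s *v (u s + matrix_inv (B s) *v h s)) \<bullet> (B s *v (u s + matrix_inv (B s) *v h s))) integrable_on {a..b}"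
      using integrable_eq[OF int2, of "\<lambda>s. (B s *v v s) \<bullet> (B s *v v s)"] exp by (simp add: v_def)
    have eq2: "A s *v (x s + z s) + B s *v (u s + matrix_inv (B s) *v h s) = (A s *v x s + w s) + kr s"
      if "s \<in> {a..b}" for s
      using Bv[OF that] Azh[of s] by (simp add: v_def matrix_vector_right_distrib algebra_simps)
    have int3: "(\<lambda>s. (A s *v x s + w s) + kr s) integrable_on {a..b}"
      by (rule integrable_add[OF adm2 kr_int])
    show "(\<lambda>s. A s *v (x s + z s) + B s *v (u s + matrix_inv (B s) *v h s)) integrable_on {a..b}"
      using integrable_eq[OF int3] eq2 by (metis (no_types, lifting))
    fix t assume t: "t \<in> {a..b}"
    have tsub: "{a..t} \<subseteq> {a..b}" using t by auto
    have "integral {a..t} (\<lambda>s. A s *v (x s + z s) + B s *v (u s + matrix_inv (B s) *v h s))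
        = integral {a..t} (\<lambda>s. (A s *v x s + w s) + kr s)"
      by (rule integral_cong) (use eq2 tsub in auto)
    also have "\<dots> = integral {a..t} (\<lambda>s. A s *v x s + w s) + integral {a..t} kr"
      by (rule integral_add) (use integrable_on_subinterval[OF adm2 tsub] integrable_on_subinterval[OF kr_int tsub] in auto)
    finally show "x t + z t = x a + z a + integral {a..t} (\<lambda>s. A s *v (x s + z s) + B s *v (u s + matrix_inv (B s) *v h s))"
      using adm3[OF t] zt[OF t] za by simp
  qed
qed


lemma quad0:
  fixes X Y :: real
  assumes h: "\<And>e. 0 \<le> 2 * (e * X) + e * e * Y"
  shows "X = 0"
proof -
  define D where "D = \<bar>Y\<bar> + 1"
  have D: "D > 0" unfolding D_def by simp
  have "0 \<le> D * D * (2 * ((- X / D) * X) + (- X / D) * (- X / D) * Y)"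
    using h[of "- X / D"] D by simp
  also have "D * D * (2 * ((- X / D) * X) + (- X / D) * (- X / D) * Y) = X * X * (Y - 2 * D)"
    using D by (simp add: field_simps)
  finally have 1: "0 \<le> X * X * (Y - 2 * D)" .
  have "Y - 2 * D < 0" unfolding D_def by (cases "Y \<ge> 0") auto
  note neg = this
  show ?thesis
  proof (rule ccontr)
    assume "X \<noteq> 0"
    then have "X * X > 0" by (cases "X > 0") (auto intro: mult_pos_pos mult_neg_neg)
    then have "X * X * (Y - 2 * D) < 0" using neg by (rule mult_pos_neg)
    then show False using 1 by linarith
  qed
qed


lemma tmono:
  fixes t :: "nat \<Rightarrow> real"
  assumes "\<And>i. i < m \<Longrightarrow> t i < t (Suc i)"
  shows "j \<le> k \<Longrightarrow> k \<le> m \<Longrightarrow> t j \<le> t k"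
proof (induction k)
  case 0 then show ?case by simp
next
  case (Suc k)
  show ?case
  proof (cases "j = Suc k")
    case False
    then have "t j \<le> t k" using Suc by auto
    also have "t k < t (Suc k)" using assms Suc by auto
    finally show ?thesis by simp
  qed simp
qed

theorem lemma3p1:
  fixes A B dA dB :: "real \<Rightarrow> real^'n^'n"
    and a b :: real and m :: nat and t :: "nat \<Rightarrow> real" and xs :: "nat \<Rightarrow> real^'n"
    and u x :: "real \<Rightarrow> real^'n"
  assumes part: "t 0 = a" "t m = b" "\<And>i. i < m \<Longrightarrow> t i < t (Suc i)"
    and H1: "\<And>s. s \<in> {a..b} \<Longrightarrow> invertible (B s)"
    and H2: "completely_controllable A B a b"
    and H3A: "\<And>s. s \<in> {a..b} \<Longrightarrow> (A has_vector_derivative dA s) (at s within {a..b})"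
      "continuous_on {a..b} dA"
    and H3B: "\<And>s. s \<in> {a..b} \<Longrightarrow> (B has_vector_derivative dB s) (at s within {a..b})"
      "continuous_on {a..b} dB"
    and adm: "admissible_pair A B a b u x" "\<And>i. i \<le> m \<Longrightarrow> x (t i) = xs i"
    and opt: "\<And>v y. admissible_pair A B a b v y \<Longrightarrow> (\<forall>i\<le>m. y (t i) = xs i) \<Longrightarrow>
                cost B a b u \<le> cost B a b v"
  shows "\<forall>i<m.
     (\<exists>w. (\<forall>s\<in>{t i..t (Suc i)}.
             (w has_vector_derivative (- (transpose (A s) *v w s))) (at s within {t i..t (Suc i)})) \<and>
          (AE s in lebesgue. s \<in> {t i..t (Suc i)} \<longrightarrow> B s *v u s = w s)) \<and>
     (\<exists>x1 x2. \<forall>s\<in>{t i..t (Suc i)}.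
          (x has_vector_derivative x1 s) (at s within {t i..t (Suc i)}) \<and>
          (x1 has_vector_derivative x2 s) (at s within {t i..t (Suc i)}) \<and>
          x2 s + (transpose (A s) - A s) *v x1 s - (transpose (A s) ** A s + dA s) *v x s = 0)"
proof (intro allI impI)
  fix i assume i: "i < m"
  define p where "p = t i"
  define q where "q = t (Suc i)"
  have tm: "\<And>j k. j \<le> k \<Longrightarrow> k \<le> m \<Longrightarrow> t j \<le> t k" using tmono[of m t, OF part(3)] by blast
  have pq: "p < q" unfolding p_def q_def using part(3)[OF i] .
  have ap: "a \<le> p" unfolding p_def using tm[of 0 i] i part(1) by simp
  have qb: "q \<le> b" unfolding q_def using tm[of "Suc i" m] i part(2) by simp
  have sub: "{p..q} \<subseteq> {a..b}" using ap qb by auto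
  have notin: "t j \<notin> {p<..<q}" if "j \<le> m" for j
  proof (cases "j \<le> i")
    case True then show ?thesis using tm[of j i] i by (auto simp: p_def)
  next
    case False then show ?thesis using tm[of "Suc i" j] that by (auto simp: q_def)
  qed
  have adm1: "(\<lambda>s. (B s *v u s) \<bullet> (B s *v u s)) integrable_on {a..b}"
    and adm2: "(\<lambda>s. A s *v x s + B s *v u s) integrable_on {a..b}"
    and adm3: "\<And>t. t \<in> {a..b} \<Longrightarrow> x t = x a + integral {a..t} (\<lambda>s. A s *v x s + B s *v u s)"
    using adm(1) unfolding admissible_pair_def by blast+
  have Acont: "continuous_on {a..b} A"
    unfolding continuous_on_eq_continuous_within
    using H3A(1) has_vector_derivative_continuous by blast
  have xc: "continuous_on {a..b} x"
  proof (rule continuous_on_eq[of _ "\<lambda>t. x a + integral {a..t} (\<lambda>s. A s *v x s + B s *v u s)"])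
    show "continuous_on {a..b} (\<lambda>t. x a + integral {a..t} (\<lambda>s. A s *v x s + B s *v u s))"
      by (intro continuous_intros indefinite_integral_continuous_1[OF adm2])
  qed (metis adm3)
  have Axc: "continuous_on {a..b} (\<lambda>s. A s *v x s)" by (rule cont_mv[OF Acont xc])
  have wint: "(\<lambda>s. B s *v u s) integrable_on {a..b}"
  proof -
    have "(\<lambda>s. (A s *v x s + B s *v u s) - A s *v x s) integrable_on {a..b}"
      by (rule integrable_diff[OF adm2 integrable_continuous_interval[OF Axc]])
    then show ?thesis by simp
  qed
  have wsq: "sqi {a..b} (\<lambda>s. B s *v u s)"
    unfolding sqi_def using integrable_imp_measurable[OF wint] adm1 by blast
  have orth: "integral {p..q} (\<lambda>s. (B s *v u s) \<bullet> (k s - A s *v integral {p..s} k)) = 0"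
    if k: "sqi {p..q} k" and k0: "integral {p..q} k = 0" for k
  proof (rule quad0)
    fix e :: real
    define ke where "ke s = e *\<^sub>R k s" for s
    have kes: "sqi {p..q} ke" unfolding ke_def by (rule sqi_scale[OF k])
    have ke0: "integral {p..q} ke = 0" unfolding ke_def using k0 by simp
    note V = variation[where A=A and B=B and u=u and x=x and k=ke, OF ap pq qb H1 Acont adm(1) wsq kes ke0]
    have "cost B a b u \<le> cost B a b (\<lambda>s. u s + matrix_inv (B s) *v
              (if s \<in> {p..q} then ke s - A s *v integral {p..s} ke else 0))"
    proof (rule opt[where y="\<lambda>s. x s + (if s \<in> {p..q} then integral {p..s} ke else 0)"])
      show "admissible_pair A B a b (\<lambda>s. u s + matrix_inv (B s) *v
              (if s \<in> {p..q} then ke s - A s *v integral {p..s} ke else 0))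
              (\<lambda>s. x s + (if s \<in> {p..q} then integral {p..s} ke else 0))"
        using V(1) by simp
      show "\<forall>j\<le>m. x (t j) + (if t j \<in> {p..q} then integral {p..t j} ke else 0) = xs j"
      proof (intro allI impI)
      fix j assume j: "j \<le> m"
      show "x (t j) + (if t j \<in> {p..q} then integral {p..t j} ke else 0) = xs j"
        using V(2)[of "t j"] notin[OF j] adm(2)[OF j] by (simp del: atLeastAtMost_iff)
      qed
    qed
    also have "\<dots> = cost B a b u
           + 2 * integral {p..q} (\<lambda>s. (B s *v u s) \<bullet> (ke s - A s *v integral {p..s} ke))
           + integral {p..q} (\<lambda>s. (ke s - A s *v integral {p..s} ke) \<bullet> (ke s - A s *v integral {p..s} ke))"
      using V(3) by simp
    also have "\<dots> = cost B a b u
           + 2 * (e * integral {p..q} (\<lambda>s. (B s *v u s) \<bullet> (k s - A s *v integral {p..s} k)))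
           + e * e * integral {p..q} (\<lambda>s. (k s - A s *v integral {p..s} k) \<bullet> (k s - A s *v integral {p..s} k))"
    proof -
      have d: "ke s - A s *v integral {p..s} ke = e *\<^sub>R (k s - A s *v integral {p..s} k)" for s
        by (simp add: ke_def[abs_def] matrix_vector_mult_scaleR scaleR_right_diff_distrib)
      show ?thesis unfolding d by (simp add: mult.assoc)
    qed
    finally show "0 \<le> 2 * (e * integral {p..q} (\<lambda>s. (B s *v u s) \<bullet> (k s - A s *v integral {p..s} k)))
           + e * e * integral {p..q} (\<lambda>s. (k s - A s *v integral {p..s} k) \<bullet> (k s - A s *v integral {p..s} k))"
      by simp
  qed
  have xeq: "x t' = x p + integral {p..t'} (\<lambda>s. A s *v x s + B s *v u s)" if t': "t' \<in> {p..q}" for t'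
  proof -
    have "integral {a..p} (\<lambda>s. A s *v x s + B s *v u s) + integral {p..t'} (\<lambda>s. A s *v x s + B s *v u s)
        = integral {a..t'} (\<lambda>s. A s *v x s + B s *v u s)"
      by (rule Henstock_Kurzweil_Integration.integral_combine)
         (use ap t' sub in \<open>auto intro: integrable_on_subinterval[OF adm2]\<close>)
    moreover have "x p = x a + integral {a..p} (\<lambda>s. A s *v x s + B s *v u s)" by (rule adm3) (use ap pq qb in auto)
    moreover have "x t' = x a + integral {a..t'} (\<lambda>s. A s *v x s + B s *v u s)" by (rule adm3) (use t' sub in auto)
    ultimately show ?thesis by (simp add: algebra_simps)
  qed
  have C: "(\<exists>wh. (\<forall>s\<in>{p..q}. (wh has_vector_derivative (- (transpose (A s) *v wh s))) (at s within {p..q})) \<and>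
              (AE s in lebesgue. s \<in> {p..q} \<longrightarrow> B s *v u s = wh s)) \<and>
         (\<exists>x1 x2. \<forall>s\<in>{p..q}.
            (x has_vector_derivative x1 s) (at s within {p..q}) \<and>
            (x1 has_vector_derivative x2 s) (at s within {p..q}) \<and>
            x2 s + (transpose (A s) - A s) *v x1 s - (transpose (A s) ** A s + dA s) *v x s = 0)"
  proof (rule conclude[of p q A dA "\<lambda>s. B s *v u s" x])
    show "p < q" by (rule pq)
    show "continuous_on {p..q} A" by (rule continuous_on_subset[OF Acont sub])
    show "(A has_vector_derivative dA s) (at s within {p..q})" if "s \<in> {p..q}" for s
      using has_vector_derivative_within_subset[OF H3A(1) sub] that sub by auto
    show "sqi {p..q} (\<lambda>s. B s *v u s)" by (rule sqi_mono[OF wsq sub])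
    show "(\<lambda>s. A s *v x s + B s *v u s) integrable_on {p..q}" by (rule integrable_on_subinterval[OF adm2 sub])
    show "\<And>t. t \<in> {p..q} \<Longrightarrow> x t = x p + integral {p..t} (\<lambda>s. A s *v x s + B s *v u s)"
      by (rule xeq)
    show "\<And>k. sqi {p..q} k \<Longrightarrow> integral {p..q} k = 0 \<Longrightarrow>
                 integral {p..q} (\<lambda>s. (B s *v u s) \<bullet> (k s - A s *v integral {p..s} k)) = 0"
      by (rule orth)
  qed
  then show "(\<exists>w. (\<forall>s\<in>{t i..t (Suc i)}.
             (w has_vector_derivative (- (transpose (A s) *v w s))) (at s within {t i..t (Suc i)})) \<and>
          (AE s in lebesgue. s \<in> {t i..t (Suc i)} \<longrightarrow> B s *v u s = w s)) \<and>
     (\<exists>x1 x2. \<forall>s\<in>{t i..t (Suc i)}.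
          (x has_vector_derivative x1 s) (at s within {t i..t (Suc i)}) \<and>
          (x1 has_vector_derivative x2 s) (at s within {t i..t (Suc i)}) \<and>
          x2 s + (transpose (A s) - A s) *v x1 s - (transpose (A s) ** A s + dA s) *v x s = 0)"
    unfolding p_def q_def .
qed

end
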